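(* Let $M$ be a manifold of dimension $n\ge3$ with pseudo-Riemannian metric $g$, and let $(\nabla,g,\nabla^* )$ be a conjugate triple of torsion free connections such that $\nabla^*$ is Ricci symmetric, projectively flat and equiaffine Einstein. Then $\tau$ is constant.
   Context: Conjugate triple: $u\,g(v,w)=g(\nabla_uv,w)+g(v,\nabla^*_uw)$. For a connection $\nabla^*$ with curvature operator $\mathcal{R}^*(u,v)=\nabla^*_u\nabla^*_v-\nabla^*_v\nabla^*_u-\nabla^*_{[u,v]}$, $Ric^*(x,y)=\mathrm{Tr}(z\mapsto\mathcal{R}^*(z,x)y)$; Ricci symmetric means $Ric^*$ symmetric; equiaffine Einstein means $Ric^*=\lambda g$ for some smooth function $\lambda$. Projectively flat: locally projectively equivalent to a flat torsion free connection. $\tau$ denotes the generalized scalar curvature, the $g$-trace of $Ric^*$ (equal to the $g$-trace of the Ricci tensor of $\nabla$). The considerations are local ("constant" means locally constant). *)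

theory Defs
  imports "HOL-Analysis.Analysis"
begin

text \<open>Local (coordinate) setting: an open set U of R^n plays the role of a chart domain
of M.  Coordinate vector fields are the axis directions.\<close>

definition pd :: "'n::finite \<Rightarrow> (real^'n \<Rightarrow> real) \<Rightarrow> real^'n \<Rightarrow> real" where
  "pd i f x = frechet_derivative f (at x) (axis i 1)"

fun Ck :: "nat \<Rightarrow> (real^'n::finite) set \<Rightarrow> (real^'n \<Rightarrow> real) \<Rightarrow> bool" where
  "Ck 0 U f = continuous_on U f"
| "Ck (Suc k) U f = (f differentiable_on U \<and> (\<forall>i. Ck k U (pd i f)))"

definition smooth_fun_on :: "(real^'n::finite) set \<Rightarrow> (real^'n \<Rightarrow> real) \<Rightarrow> bool" where
  "smooth_fun_on U f = (\<forall>k. Ck k U f)"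

text \<open>A connection is given by Christoffel symbols: G x i j k is the k-th component of
 nabla_{d_i} d_j at x.\<close>
type_synonym 'n conn = "real^'n \<Rightarrow> 'n \<Rightarrow> 'n \<Rightarrow> 'n \<Rightarrow> real"
type_synonym 'n metric = "real^'n \<Rightarrow> 'n \<Rightarrow> 'n \<Rightarrow> real"

definition smooth_conn :: "(real^'n::finite) set \<Rightarrow> 'n conn \<Rightarrow> bool" where
  "smooth_conn U G = (\<forall>i j k. smooth_fun_on U (\<lambda>x. G x i j k))"

definition torsion_free :: "(real^'n::finite) set \<Rightarrow> 'n conn \<Rightarrow> bool" where
  "torsion_free U G = (\<forall>x\<in>U. \<forall>i j k. G x i j k = G x j i k)"

text \<open>curv G x a b c l = l-th component of R(d_a,d_b)d_c, where
  R(u,v) = nabla_u nabla_v - nabla_v nabla_u - nabla_[u,v] (and [d_a,d_b]=0).\<close>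
definition curv :: "'n::finite conn \<Rightarrow> real^'n \<Rightarrow> 'n \<Rightarrow> 'n \<Rightarrow> 'n \<Rightarrow> 'n \<Rightarrow> real" where
  "curv G x a b c l =
     pd a (\<lambda>y. G y b c l) x - pd b (\<lambda>y. G y a c l) x
     + (\<Sum>m\<in>UNIV. G x b c m * G x a m l) - (\<Sum>m\<in>UNIV. G x a c m * G x b m l)"

definition ric :: "'n::finite conn \<Rightarrow> real^'n \<Rightarrow> 'n \<Rightarrow> 'n \<Rightarrow> real" where
  "ric G x j k = (\<Sum>i\<in>UNIV. curv G x i j k i)"

definition flat :: "(real^'n::finite) set \<Rightarrow> 'n conn \<Rightarrow> bool" where
  "flat U G = (\<forall>x\<in>U. \<forall>a b c l. curv G x a b c l = 0)"

definition ricci_symmetric :: "(real^'n::finite) set \<Rightarrow> 'n conn \<Rightarrow> bool" where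
  "ricci_symmetric U G = (\<forall>x\<in>U. \<forall>j k. ric G x j k = ric G x k j)"

definition gmat :: "'n::finite metric \<Rightarrow> real^'n \<Rightarrow> real^'n^'n" where
  "gmat g x = (\<chi> i j. g x i j)"

definition pseudo_riemannian :: "(real^'n::finite) set \<Rightarrow> 'n metric \<Rightarrow> bool" where
  "pseudo_riemannian U g =
     ((\<forall>i j. smooth_fun_on U (\<lambda>x. g x i j)) \<and>
      (\<forall>x\<in>U. \<forall>i j. g x i j = g x j i) \<and>
      (\<forall>x\<in>U. det (gmat g x) \<noteq> 0))"

text \<open>Conjugate triple: u g(v,w) = g(nabla_u v, w) + g(v, nabla*_u w), on coordinate fields.\<close>
definition conjugate_triple :: "(real^'n::finite) set \<Rightarrow> 'n conn \<Rightarrow> 'n metric \<Rightarrow> 'n conn \<Rightarrow> bool" where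
  "conjugate_triple U G g Gs =
     (\<forall>x\<in>U. \<forall>k i j. pd k (\<lambda>y. g y i j) x =
        (\<Sum>l\<in>UNIV. G x k i l * g x l j) + (\<Sum>l\<in>UNIV. Gs x k j l * g x i l))"

text \<open>Projective equivalence of torsion free connections:
  nabla'_X Y = nabla_X Y + rho(X) Y + rho(Y) X.\<close>
definition projectively_flat :: "(real^'n::finite) set \<Rightarrow> 'n conn \<Rightarrow> bool" where
  "projectively_flat U G =
     (\<forall>p\<in>U. \<exists>V D rho. open V \<and> p \<in> V \<and> V \<subseteq> U \<and>
        smooth_conn V D \<and> torsion_free V D \<and> flat V D \<and>
        (\<forall>i. smooth_fun_on V (\<lambda>x. rho x i)) \<and>
        (\<forall>x\<in>V. \<forall>i j k. G x i j k = D x i j k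
            + (if k = j then rho x i else 0) + (if k = i then rho x j else 0)))"

definition equiaffine_einstein :: "(real^'n::finite) set \<Rightarrow> 'n conn \<Rightarrow> 'n metric \<Rightarrow> bool" where
  "equiaffine_einstein U G g =
     (\<exists>lam. smooth_fun_on U lam \<and> (\<forall>x\<in>U. \<forall>i j. ric G x i j = lam x * g x i j))"

definition gen_scalar_curv :: "'n::finite metric \<Rightarrow> 'n conn \<Rightarrow> real^'n \<Rightarrow> real" where
  "gen_scalar_curv g Gs x = (\<Sum>i\<in>UNIV. \<Sum>j\<in>UNIV. matrix_inv (gmat g x) $ i $ j * ric Gs x i j)"

definition locally_constant_on :: "(real^'n::finite) set \<Rightarrow> (real^'n \<Rightarrow> real) \<Rightarrow> bool" where
  "locally_constant_on U f = (\<forall>p\<in>U. \<exists>V. open V \<and> p \<in> V \<and> (\<forall>x\<in>V \<inter> U. f x = f p))"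

end

theory Submission
  imports Defs
begin


lemma pd_hasderiv: "(f has_derivative f') (at x) \<Longrightarrow> pd i f x = f' (axis i 1)"
  unfolding pd_def using frechet_derivative_at by metis

lemma hd_pd: "f differentiable (at x) \<Longrightarrow> (f has_derivative frechet_derivative f (at x)) (at x)"
  using frechet_derivative_works by blast

lemma pd_add: "f differentiable (at x) \<Longrightarrow> h differentiable (at x) \<Longrightarrow>
  pd i (\<lambda>y. f y + h y) x = pd i f x + pd i h x"
  unfolding pd_def
  by (metis (mono_tags) frechet_derivative_at frechet_derivative_works has_derivative_add)

lemma pd_diff: "f differentiable (at x) \<Longrightarrow> h differentiable (at x) \<Longrightarrow>
  pd i (\<lambda>y. f y - h y) x = pd i f x - pd i h x"
  unfolding pd_def
  by (metis (mono_tags) frechet_derivative_at frechet_derivative_works has_derivative_diff)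

lemma pd_mult: "f differentiable (at x) \<Longrightarrow> h differentiable (at x) \<Longrightarrow>
  pd i (\<lambda>y. f y * h y :: real) x = f x * pd i h x + pd i f x * h x"
proof -
  assume a: "f differentiable (at x)" "h differentiable (at x)"
  have "((\<lambda>y. f y * h y) has_derivative (\<lambda>v. f x * frechet_derivative h (at x) v + frechet_derivative f (at x) v * h x)) (at x)"
    using has_derivative_mult[OF hd_pd[OF a(1)] hd_pd[OF a(2)]] by simp
  from pd_hasderiv[OF this, of i] show ?thesis by (simp add: pd_def)
qed

lemma pd_const: "pd i (\<lambda>y. c) x = 0"
  using pd_hasderiv[of "\<lambda>y. c" "\<lambda>v. 0" x i] by simp

lemma pd_cmult: "f differentiable (at x) \<Longrightarrow> pd i (\<lambda>y. c * f y :: real) x = c * pd i f x"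
  using pd_mult[of "\<lambda>y. c" x f i] by (simp add: pd_const)

lemma pd_sum: "finite A \<Longrightarrow> (\<And>m. m \<in> A \<Longrightarrow> f m differentiable (at x)) \<Longrightarrow>
  pd i (\<lambda>y. \<Sum>m\<in>A. f m y) x = (\<Sum>m\<in>A. pd i (f m) x)"
proof -
  assume fin: "finite A" and d: "\<And>m. m \<in> A \<Longrightarrow> f m differentiable (at x)"
  have "((\<lambda>y. \<Sum>m\<in>A. f m y) has_derivative (\<lambda>v. \<Sum>m\<in>A. frechet_derivative (f m) (at x) v)) (at x)"
    by (rule has_derivative_sum) (use d hd_pd in blast)
  from pd_hasderiv[OF this, of i] show ?thesis by (simp add: pd_def)
qed

lemma pd_local: assumes "open V" "x \<in> V" "\<And>y. y \<in> V \<Longrightarrow> f y = h y"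
  shows "pd i f x = pd i h x"
proof -
  have eq: "(f has_derivative f') (at x) \<longleftrightarrow> (h has_derivative f') (at x)" for f'
  proof
    assume "(f has_derivative f') (at x)" then show "(h has_derivative f') (at x)"
      by (rule has_derivative_transform_within_open[OF _ assms(1,2)]) (simp add: assms(3))
  next
    assume "(h has_derivative f') (at x)" then show "(f has_derivative f') (at x)"
      by (rule has_derivative_transform_within_open[OF _ assms(1,2)]) (simp add: assms(3))
  qed
  have "(\<lambda>f'. (f has_derivative f') (at x)) = (\<lambda>f'. (h has_derivative f') (at x))"
    using eq by blast
  then have "frechet_derivative f (at x) = frechet_derivative h (at x)"
    unfolding frechet_derivative_def by (rule arg_cong)
  then show ?thesis unfolding pd_def by simp
qed

lemma differentiable_sum_fn: "finite A \<Longrightarrow> (\<And>m. m \<in> A \<Longrightarrow> f m differentiable (at x)) \<Longrightarrow>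
   (\<lambda>y. \<Sum>m\<in>A. f m y) differentiable (at x)"
  by (induction A rule: finite_induct) auto

lemma smooth_diff: "smooth_fun_on S f \<Longrightarrow> open S \<Longrightarrow> x \<in> S \<Longrightarrow> f differentiable (at x)"
  unfolding smooth_fun_on_def
  by (metis Ck.simps(2) at_within_open differentiable_on_def)

lemma smooth_pd: "smooth_fun_on S f \<Longrightarrow> smooth_fun_on S (pd i f)"
  unfolding smooth_fun_on_def by (metis Ck.simps(2))

lemma smooth_cont: "smooth_fun_on S f \<Longrightarrow> continuous_on S f"
  unfolding smooth_fun_on_def by (metis Ck.simps(1))



lemma dir_deriv:
  assumes "f differentiable (at (a + t *\<^sub>R v))"
  shows "((\<lambda>s. f (a + s *\<^sub>R v)) has_real_derivative frechet_derivative f (at (a + t *\<^sub>R v)) v) (at t)"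
proof -
  define f' where "f' = frechet_derivative f (at (a + t *\<^sub>R v))"
  have g: "((\<lambda>s. a + s *\<^sub>R v) has_derivative (\<lambda>h. h *\<^sub>R v)) (at t)"
    by (intro derivative_eq_intros) auto
  have f: "(f has_derivative f') (at (a + t *\<^sub>R v))" using assms hd_pd f'_def by blast
  have c: "((\<lambda>s. f (a + s *\<^sub>R v)) has_derivative (\<lambda>h. f' (h *\<^sub>R v))) (at t)"
    using diff_chain_at[OF g f] unfolding o_def .
  have lin: "linear f'" using f has_derivative_linear by blast
  have eq: "(\<lambda>h. f' (h *\<^sub>R v)) = (*) (f' v)"
  proof
    fix h show "f' (h *\<^sub>R v) = f' v * h" using linear_scale[OF lin, of h v] by simp
  qed
  show ?thesis unfolding has_field_derivative_def f'_def[symmetric] using c unfolding eq .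
qed

lemma dir_pd:
  assumes "f differentiable (at (a + t *\<^sub>R axis i 1))"
  shows "((\<lambda>s. f (a + s *\<^sub>R axis i 1)) has_real_derivative pd i f (a + t *\<^sub>R axis i 1)) (at t)"
  using dir_deriv[OF assms] unfolding pd_def .

lemma mvt_pd:
  assumes "0 < h" and "\<And>t. 0 \<le> t \<Longrightarrow> t \<le> h \<Longrightarrow> f differentiable (at (a + t *\<^sub>R axis i 1))"
  shows "\<exists>t. 0 < t \<and> t < h \<and> f (a + h *\<^sub>R axis i 1) - f a = h * pd i f (a + t *\<^sub>R axis i 1)"
proof -
  let ?u = "\<lambda>s. f (a + s *\<^sub>R axis i 1)"
  have d: "(?u has_real_derivative pd i f (a + t *\<^sub>R axis i 1)) (at t)" if "0 \<le> t" "t \<le> h" for t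
    using dir_pd assms(2) that by blast
  have c: "continuous_on {0..h} ?u"
    by (rule continuous_at_imp_continuous_on) (metis atLeastAtMost_iff d DERIV_isCont)
  have dif: "?u differentiable (at x)" if "0<x" "x<h" for x
    using d[of x] that unfolding real_differentiable_def by auto
  have "\<exists>l z. 0 < z \<and> z < h \<and> DERIV ?u z :> l \<and> ?u h - ?u 0 = (h - 0) * l"
    by (rule MVT[OF assms(1) c dif])
  then obtain l t where t: "0 < t" "t < h" "DERIV ?u t :> l" "?u h - ?u 0 = (h - 0) * l"
    by blast
  have "l = pd i f (a + t *\<^sub>R axis i 1)" using DERIV_unique[OF t(3) d[of t]] t by simp
  then show ?thesis using t by auto
qed



lemma shift_diff: "f differentiable (at (y + c)) \<Longrightarrow> (\<lambda>z. f (z + c)) differentiable (at y)"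
  using differentiable_chain_at[of "\<lambda>z. z + c" y f] by (simp add: o_def)

lemma pd_shift: assumes "f differentiable (at (y + c))"
  shows "pd i (\<lambda>z. f (z + c)) y = pd i f (y + c)"
proof -
  have g: "((\<lambda>z. z + c) has_derivative (\<lambda>h. h)) (at y)" by (intro derivative_eq_intros) auto
  have "((\<lambda>z. f (z + c)) has_derivative frechet_derivative f (at (y + c))) (at y)"
    using diff_chain_at[OF g hd_pd[OF assms]] unfolding o_def .
  from pd_hasderiv[OF this, of i] show ?thesis by (simp add: pd_def)
qed

lemma half:
  fixes f :: "real^'n::finite \<Rightarrow> real"
  assumes h: "0 < h"
    and box: "\<And>s t. 0 \<le> s \<Longrightarrow> s \<le> h \<Longrightarrow> 0 \<le> t \<Longrightarrow> t \<le> h \<Longrightarrow> x + s *\<^sub>R axis i 1 + t *\<^sub>R axis j 1 \<in> S"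
    and df: "\<And>y. y \<in> S \<Longrightarrow> f differentiable (at y)"
    and dfi: "\<And>y. y \<in> S \<Longrightarrow> pd i f differentiable (at y)"
  shows "\<exists>s t. 0 < s \<and> s < h \<and> 0 < t \<and> t < h \<and>
    f (x + h *\<^sub>R axis i 1 + h *\<^sub>R axis j 1) - f (x + h *\<^sub>R axis i 1) - f (x + h *\<^sub>R axis j 1) + f x
      = h * h * pd j (pd i f) (x + s *\<^sub>R axis i 1 + t *\<^sub>R axis j 1)"
proof -
  define c where "c = h *\<^sub>R axis j (1::real)"
  define u where "u = (\<lambda>y. f (y + c) - f y)"
  have dfa: "f differentiable (at (x + s *\<^sub>R axis i 1))" 
    and dfb: "f differentiable (at (x + s *\<^sub>R axis i 1 + c))" if "0 \<le> s" "s \<le> h" for s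
    using df box[of s 0] box[of s h] that h unfolding c_def by auto
  have du: "u differentiable (at (x + s *\<^sub>R axis i 1))" if "0 \<le> s" "s \<le> h" for s
    unfolding u_def using shift_diff[OF dfb[OF that]] dfa[OF that] by (intro differentiable_diff) auto
  obtain s where s: "0 < s" "s < h" "u (x + h *\<^sub>R axis i 1) - u x = h * pd i u (x + s *\<^sub>R axis i 1)"
    using mvt_pd[OF h, of u x i] du by auto
  have pu: "pd i u (x + s *\<^sub>R axis i 1) = pd i f (x + s *\<^sub>R axis i 1 + c) - pd i f (x + s *\<^sub>R axis i 1)"
    unfolding u_def using pd_diff[OF shift_diff[OF dfb] dfa, of s i] pd_shift[OF dfb, of s i] s by simp
  have dpi: "pd i f differentiable (at (x + s *\<^sub>R axis i 1 + t *\<^sub>R axis j 1))" if "0 \<le> t" "t \<le> h" for t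
    using dfi box[of s t] s that by auto
  obtain t where t: "0 < t" "t < h" "pd i f (x + s *\<^sub>R axis i 1 + h *\<^sub>R axis j 1) - pd i f (x + s *\<^sub>R axis i 1)
      = h * pd j (pd i f) (x + s *\<^sub>R axis i 1 + t *\<^sub>R axis j 1)"
    using mvt_pd[OF h, of "pd i f" "x + s *\<^sub>R axis i 1" j] dpi by auto
  have "f (x + h *\<^sub>R axis i 1 + h *\<^sub>R axis j 1) - f (x + h *\<^sub>R axis i 1) - f (x + h *\<^sub>R axis j 1) + f x
      = u (x + h *\<^sub>R axis i 1) - u x"
    unfolding u_def c_def by (simp add: add_ac)
  also have "\<dots> = h * h * pd j (pd i f) (x + s *\<^sub>R axis i 1 + t *\<^sub>R axis j 1)"
    using s(3) pu t(3) unfolding c_def by simp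
  finally show ?thesis using s t by blast
qed

lemma abs_contra: "\<bar>p - a\<bar> < \<bar>a - b\<bar> / 2 \<Longrightarrow> \<bar>q - b\<bar> < \<bar>a - b\<bar> / 2 \<Longrightarrow> p = q \<Longrightarrow> False"
  for p q a b :: real by (simp add: abs_if split: if_splits)

lemma schwarz:
  fixes f :: "real^'n::finite \<Rightarrow> real"
  assumes S: "open S" "x \<in> S"
    and df: "\<And>y. y \<in> S \<Longrightarrow> f differentiable (at y)"
    and dfi: "\<And>y. y \<in> S \<Longrightarrow> pd i f differentiable (at y)"
    and dfj: "\<And>y. y \<in> S \<Longrightarrow> pd j f differentiable (at y)"
    and c1: "continuous_on S (pd j (pd i f))" and c2: "continuous_on S (pd i (pd j f))"
  shows "pd j (pd i f) x = pd i (pd j f) x"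
proof (rule ccontr)
  assume ne: "pd j (pd i f) x \<noteq> pd i (pd j f) x"
  define e where "e = \<bar>pd j (pd i f) x - pd i (pd j f) x\<bar> / 2"
  have e: "e > 0" using ne unfolding e_def by auto
  obtain r where r: "r > 0" "ball x r \<subseteq> S" using S open_contains_ball by blast
  have "isCont (pd j (pd i f)) x" using c1 S continuous_on_eq_continuous_at by blast
  then obtain d1 where d1: "d1 > 0" "\<And>y. dist y x < d1 \<Longrightarrow> dist (pd j (pd i f) y) (pd j (pd i f) x) < e"
    using e unfolding continuous_at_eps_delta by blast
  have "isCont (pd i (pd j f)) x" using c2 S continuous_on_eq_continuous_at by blast
  then obtain d2 where d2: "d2 > 0" "\<And>y. dist y x < d2 \<Longrightarrow> dist (pd i (pd j f) y) (pd i (pd j f) x) < e"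
    using e unfolding continuous_at_eps_delta by blast
  define h where "h = min r (min d1 d2) / 3"
  have h: "h > 0" using r d1 d2 unfolding h_def by auto
  have close: "dist (x + s *\<^sub>R axis a (1::real) + t *\<^sub>R axis b (1::real)) x < min r (min d1 d2)"
    if "0 \<le> s" "s \<le> h" "0 \<le> t" "t \<le> h" for s t a b
  proof -
    have "dist (x + s *\<^sub>R axis a (1::real) + t *\<^sub>R axis b (1::real)) x = norm (s *\<^sub>R axis a (1::real) + t *\<^sub>R axis b (1::real))"
      by (simp add: dist_norm)
    also have "\<dots> \<le> norm (s *\<^sub>R axis a (1::real)) + norm (t *\<^sub>R axis b (1::real))" by (rule norm_triangle_ineq)
    also have "\<dots> = s + t" using that by simp
    also have "\<dots> < min r (min d1 d2)" using that h unfolding h_def by linarith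
    finally show ?thesis .
  qed
  have box: "x + s *\<^sub>R axis a (1::real) + t *\<^sub>R axis b (1::real) \<in> S"
    if "0 \<le> s" "s \<le> h" "0 \<le> t" "t \<le> h" for s t a b
    using close[OF that, of a b] r by (auto simp: dist_commute)
  obtain s1 t1 where st1: "0 < s1" "s1 < h" "0 < t1" "t1 < h"
    "f (x + h *\<^sub>R axis i 1 + h *\<^sub>R axis j 1) - f (x + h *\<^sub>R axis i 1) - f (x + h *\<^sub>R axis j 1) + f x
      = h * h * pd j (pd i f) (x + s1 *\<^sub>R axis i 1 + t1 *\<^sub>R axis j 1)"
    using half[OF h box df dfi] by blast
  obtain s2 t2 where st2: "0 < s2" "s2 < h" "0 < t2" "t2 < h"
    "f (x + h *\<^sub>R axis j 1 + h *\<^sub>R axis i 1) - f (x + h *\<^sub>R axis j 1) - f (x + h *\<^sub>R axis i 1) + f x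
      = h * h * pd i (pd j f) (x + s2 *\<^sub>R axis j 1 + t2 *\<^sub>R axis i 1)"
    using half[OF h box df dfj] by blast
  have E: "f (x + h *\<^sub>R axis j 1 + h *\<^sub>R axis i 1) = f (x + h *\<^sub>R axis i 1 + h *\<^sub>R axis j 1)" by (simp add: add_ac)
  have "h * h * pd j (pd i f) (x + s1 *\<^sub>R axis i 1 + t1 *\<^sub>R axis j 1)
      = h * h * pd i (pd j f) (x + s2 *\<^sub>R axis j 1 + t2 *\<^sub>R axis i 1)"
    using st1(5) st2(5) E by linarith
  then have eq: "pd j (pd i f) (x + s1 *\<^sub>R axis i 1 + t1 *\<^sub>R axis j 1)
      = pd i (pd j f) (x + s2 *\<^sub>R axis j 1 + t2 *\<^sub>R axis i 1)" using h by simp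
  have a1: "dist (pd j (pd i f) (x + s1 *\<^sub>R axis i 1 + t1 *\<^sub>R axis j 1)) (pd j (pd i f) x) < e"
    using d1(2) close[of s1 t1 i j] st1 by auto
  have a2: "dist (pd i (pd j f) (x + s2 *\<^sub>R axis j 1 + t2 *\<^sub>R axis i 1)) (pd i (pd j f) x) < e"
    using d2(2) close[of s2 t2 j i] st2 by auto
  from a1 a2 eq show False unfolding e_def dist_real_def by (rule abs_contra)
qed



definition dl :: "'a \<Rightarrow> 'a \<Rightarrow> real" where "dl a b = (if a = b then 1 else 0)"

lemma sum_dl1[simp]: "(\<Sum>m\<in>(UNIV::'n::finite set). dl m c * f m) = f c"
  proof - have "(\<Sum>m\<in>UNIV. dl m c * f m) = (\<Sum>m\<in>UNIV. if m = c then f m else 0)" by (rule sum.cong) (auto simp: dl_def) then show ?thesis by simp qed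
lemma sum_dl2[simp]: "(\<Sum>m\<in>(UNIV::'n::finite set). f m * dl m c) = f c"
  proof - have "(\<Sum>m\<in>UNIV. f m * dl m c) = (\<Sum>m\<in>UNIV. if m = c then f m else 0)" by (rule sum.cong) (auto simp: dl_def) then show ?thesis by simp qed
lemma sum_dl3[simp]: "(\<Sum>m\<in>(UNIV::'n::finite set). dl c m * f m) = f c"
  proof - have "(\<Sum>m\<in>UNIV. dl c m * f m) = (\<Sum>m\<in>UNIV. if m = c then f m else 0)" by (rule sum.cong) (auto simp: dl_def) then show ?thesis by simp qed
lemma sum_dl4[simp]: "(\<Sum>m\<in>(UNIV::'n::finite set). f m * dl c m) = f c"
  proof - have "(\<Sum>m\<in>UNIV. f m * dl c m) = (\<Sum>m\<in>UNIV. if m = c then f m else 0)" by (rule sum.cong) (auto simp: dl_def) then show ?thesis by simp qed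

lemma dl_l: "dl a b * x = (if a = b then x else 0)" by (simp add: dl_def)
lemma dl_r: "x * dl a b = (if a = b then x else 0)" by (simp add: dl_def)
lemma if_ml: "(if P then x else 0) * y = (if P then x * y else (0::real))" by simp
lemma if_mr: "y * (if P then x else 0) = (if P then y * x else (0::real))" by simp
lemma sum_if_const: "(\<Sum>m\<in>A. if P then f m else 0) = (if P then (\<Sum>m\<in>A. f m) else (0::real))" by simp

lemmas dlsimps = dl_l dl_r if_ml if_mr sum_if_const sum.delta sum.delta' sum.distrib

lemma quad:
  fixes D :: "'n::finite \<Rightarrow> 'n \<Rightarrow> 'n \<Rightarrow> real" and r :: "'n \<Rightarrow> real"
  assumes Dsym: "\<And>i j k. D i j k = D j i k"
  shows "(\<Sum>m\<in>UNIV. (D b c m + dl m c * r b + dl m b * r c) * (D a m l + dl l m * r a + dl l a * r m))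
       - (\<Sum>m\<in>UNIV. (D a c m + dl m c * r a + dl m a * r c) * (D b m l + dl l m * r b + dl l b * r m))
     = (\<Sum>m\<in>UNIV. D b c m * D a m l) - (\<Sum>m\<in>UNIV. D a c m * D b m l)
       + dl l a * ((\<Sum>m\<in>UNIV. D b c m * r m) + r b * r c) - dl l b * ((\<Sum>m\<in>UNIV. D a c m * r m) + r a * r c)"
  using Dsym[of a b l]
  by (simp add: ring_distribs dlsimps sum_distrib_left[symmetric] algebra_simps)



lemma codazzi_alg:
  fixes D :: "'n::finite \<Rightarrow> 'n \<Rightarrow> 'n \<Rightarrow> real" and r :: "'n \<Rightarrow> real"
    and DD :: "'n \<Rightarrow> 'n \<Rightarrow> 'n \<Rightarrow> 'n \<Rightarrow> real" and dr :: "'n \<Rightarrow> 'n \<Rightarrow> real"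
    and P :: "'n \<Rightarrow> 'n \<Rightarrow> real"
  assumes Dsym: "\<And>i j k. D i j k = D j i k"
    and drsym: "dr a b = dr b a"
    and flat: "\<And>m. DD b a c m - DD a b c m + (\<Sum>k\<in>UNIV. D a c k * D b k m) - (\<Sum>k\<in>UNIV. D b c k * D a k m) = 0"
    and P: "\<And>i j. P i j = dr i j - (\<Sum>m\<in>UNIV. D i j m * r m) - r i * r j"
  shows "(- (\<Sum>m\<in>UNIV. D a c m * dr b m + DD b a c m * r m) - (r a * dr b c + dr b a * r c))
       - (- (\<Sum>m\<in>UNIV. D b c m * dr a m + DD a b c m * r m) - (r b * dr a c + dr a b * r c))
     = - (\<Sum>m\<in>UNIV. D a c m * P b m) + (\<Sum>m\<in>UNIV. D b c m * P a m) - r a * P b c + r b * P a c"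
proof -
  have f2: "DD b a c m * r m = DD a b c m * r m - (\<Sum>k\<in>UNIV. D a c k * D b k m * r m) + (\<Sum>k\<in>UNIV. D b c k * D a k m * r m)" for m
  proof -
    have e: "DD b a c m = DD a b c m - (\<Sum>k\<in>UNIV. D a c k * D b k m) + (\<Sum>k\<in>UNIV. D b c k * D a k m)"
      using flat[of m] by linarith
    show ?thesis by (subst e) (simp add: algebra_simps sum_distrib_right sum_distrib_left)
  qed
  have sw1: "(\<Sum>m\<in>UNIV. \<Sum>k\<in>UNIV. D a c k * D b k m * r m) = (\<Sum>m\<in>UNIV. D a c m * (\<Sum>k\<in>UNIV. D b m k * r k))"
    by (subst sum.swap) (simp add: sum_distrib_left mult.assoc)
  have sw2: "(\<Sum>m\<in>UNIV. \<Sum>k\<in>UNIV. D b c k * D a k m * r m) = (\<Sum>m\<in>UNIV. D b c m * (\<Sum>k\<in>UNIV. D a m k * r k))"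
    by (subst sum.swap) (simp add: sum_distrib_left mult.assoc)
  have L: "(\<Sum>m\<in>UNIV. D a c m * dr b m + DD b a c m * r m)
       = (\<Sum>m\<in>UNIV. D a c m * dr b m) + (\<Sum>m\<in>UNIV. DD a b c m * r m)
         - (\<Sum>m\<in>UNIV. D a c m * (\<Sum>k\<in>UNIV. D b m k * r k)) + (\<Sum>m\<in>UNIV. D b c m * (\<Sum>k\<in>UNIV. D a m k * r k))"
    unfolding f2 sum.distrib sum_subtractf sw1[symmetric] sw2[symmetric] by simp
  have pb: "(\<Sum>m\<in>UNIV. D a c m * P b m) = (\<Sum>m\<in>UNIV. D a c m * dr b m)
     - (\<Sum>m\<in>UNIV. D a c m * (\<Sum>k\<in>UNIV. D b m k * r k)) - r b * (\<Sum>m\<in>UNIV. D a c m * r m)"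
    unfolding P right_diff_distrib sum_subtractf by (simp add: sum_distrib_left mult_ac)
  have pa: "(\<Sum>m\<in>UNIV. D b c m * P a m) = (\<Sum>m\<in>UNIV. D b c m * dr a m)
     - (\<Sum>m\<in>UNIV. D b c m * (\<Sum>k\<in>UNIV. D a m k * r k)) - r a * (\<Sum>m\<in>UNIV. D b c m * r m)"
    unfolding P right_diff_distrib sum_subtractf by (simp add: sum_distrib_left mult_ac)
  have L2: "(\<Sum>m\<in>UNIV. D b c m * dr a m + DD a b c m * r m)
       = (\<Sum>m\<in>UNIV. D b c m * dr a m) + (\<Sum>m\<in>UNIV. DD a b c m * r m)"
    by (rule sum.distrib)
  show ?thesis unfolding L L2 pb pa P[of b c] P[of a c] using drsym
    by (simp add: algebra_simps)
qed

lemma final_alg: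
  fixes D G Ga :: "'n::finite \<Rightarrow> 'n \<Rightarrow> 'n \<Rightarrow> real" and r mu' :: "'n \<Rightarrow> real"
    and g :: "'n \<Rightarrow> 'n \<Rightarrow> real" and dg :: "'n \<Rightarrow> 'n \<Rightarrow> 'n \<Rightarrow> real"
  assumes gsym: "\<And>i j. g i j = g j i"
    and Gsym: "\<And>i j k. G i j k = G j i k"
    and D: "\<And>i j k. D i j k = Ga i j k - dl k j * r i - dl k i * r j"
    and dg: "\<And>b a c. dg b a c = (\<Sum>l\<in>UNIV. G b a l * g l c) + (\<Sum>l\<in>UNIV. Ga b c l * g a l)"
    and E: "(mu * dg b a c + dmu b * g a c) - (mu * dg a b c + dmu a * g b c)
       = - (\<Sum>m\<in>UNIV. D a c m * (mu * g b m)) + (\<Sum>m\<in>UNIV. D b c m * (mu * g a m))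
         - r a * (mu * g b c) + r b * (mu * g a c)"
  shows "dmu b * g a c = dmu a * g b c"
proof -
  have s1: "(\<Sum>m\<in>UNIV. D a c m * (mu * g b m)) = mu * (\<Sum>m\<in>UNIV. Ga a c m * g b m) - mu * r a * g b c - mu * r c * g b a"
    for a b c unfolding D by (simp add: dlsimps sum_subtractf algebra_simps sum_distrib_left[symmetric])
  have s2: "(\<Sum>l\<in>UNIV. G b a l * g l c) = (\<Sum>l\<in>UNIV. G a b l * g l c)"
    using Gsym[of b a] by simp
  have gba: "g b a = g a b" by (rule gsym)
  from E show ?thesis unfolding s1 dg s2 gba by (simp add: algebra_simps)
qed



lemma rows_prop:
  fixes A :: "real^'n^'n" and d :: "'n \<Rightarrow> real"
  assumes "det A \<noteq> 0" "a \<noteq> b" "\<And>c. d b * A$a$c = d a * A$b$c"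
  shows "d b = 0"
proof (rule ccontr)
  assume nz: "d b \<noteq> 0"
  define k where "k = d a / d b"
  have ra: "row a A = k *s row b A"
    unfolding k_def row_def vec_eq_iff using assms(3) nz
    by (auto simp: field_simps)
  let ?B = "(\<chi> i. if i = a then row a A + (- k) *s row b A else row i A) :: real^'n^'n"
  have "det ?B = det A" by (rule det_row_operation[OF assms(2)])
  moreover have "row a ?B = 0" unfolding ra by (simp add: row_def vec_eq_iff)
  then have "det ?B = 0" by (rule det_zero_row(1))
  ultimately show False using assms(1) by simp
qed

lemma inv_left: fixes A :: "real^'n^'n" assumes "det A \<noteq> 0" shows "matrix_inv A ** A = mat 1"
proof -
  have "invertible A" using assms invertible_det_nz by blast
  then obtain A' where "A ** A' = mat 1 \<and> A' ** A = mat 1" unfolding invertible_def by blast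
  then have "A ** matrix_inv A = mat 1 \<and> matrix_inv A ** A = mat 1"
    unfolding matrix_inv_def by (rule someI)
  then show ?thesis by blast
qed

lemma trace_inv:
  fixes g :: "'n::finite metric"
  assumes "det (gmat g y) \<noteq> 0" "\<And>i j. g y i j = g y j i"
  shows "(\<Sum>i\<in>UNIV. \<Sum>j\<in>UNIV. matrix_inv (gmat g y) $ i $ j * g y i j) = real CARD('n)"
proof -
  have "(\<Sum>j\<in>UNIV. matrix_inv (gmat g y) $ i $ j * g y i j) = 1" for i
  proof -
    have "(matrix_inv (gmat g y) ** gmat g y) $ i $ i = 1" using inv_left[OF assms(1)] by (simp add: mat_def)
    then show ?thesis unfolding matrix_matrix_mult_def gmat_def using assms(2) by simp
  qed
  then show ?thesis by simp
qed



lemma schwarz_smooth: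
  fixes f :: "real^'n::finite \<Rightarrow> real"
  assumes "smooth_fun_on S f" "open S" "x \<in> S"
  shows "pd j (pd i f) x = pd i (pd j f) x"
proof (rule schwarz[OF assms(2,3)])
  show "\<And>y. y \<in> S \<Longrightarrow> f differentiable (at y)" using smooth_diff assms by blast
  show "\<And>y. y \<in> S \<Longrightarrow> pd i f differentiable (at y)" using smooth_diff smooth_pd assms by blast
  show "\<And>y. y \<in> S \<Longrightarrow> pd j f differentiable (at y)" using smooth_diff smooth_pd assms by blast
  show "continuous_on S (pd j (pd i f))" using smooth_cont smooth_pd assms by blast
  show "continuous_on S (pd i (pd j f))" using smooth_cont smooth_pd assms by blast
qed

lemma zero_deriv:
  fixes f :: "real^'n::finite \<Rightarrow> real"
  assumes "f differentiable (at y)" "\<And>i. pd i f y = 0"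
  shows "(f has_derivative (\<lambda>h. 0)) (at y)"
proof -
  let ?f' = "frechet_derivative f (at y)"
  have d: "(f has_derivative ?f') (at y)" using assms(1) hd_pd by blast
  have lin: "linear ?f'" using d has_derivative_linear by blast
  have "?f' h = 0" for h
  proof -
    have "?f' h = ?f' (\<Sum>i\<in>UNIV. h$i *\<^sub>R axis i 1)"
      using basis_expansion[of h] by (simp add: scalar_mult_eq_scaleR)
    also have "\<dots> = (\<Sum>i\<in>UNIV. h$i * ?f' (axis i 1))"
      by (simp add: linear_sum[OF lin] linear_scale[OF lin])
    also have "\<dots> = 0" using assms(2) unfolding pd_def by simp
    finally show ?thesis .
  qed
  then have "?f' = (\<lambda>h. 0)" by auto
  then show ?thesis using d by simp
qed



theorem corollary9p11:
  fixes U :: "(real^'n) set" and g :: "'n metric" and G Gs :: "'n conn"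
  assumes "CARD('n) \<ge> 3"
    and "open U"
    and "pseudo_riemannian U g"
    and "smooth_conn U G" and "smooth_conn U Gs"
    and "torsion_free U G" and "torsion_free U Gs"
    and "conjugate_triple U G g Gs"
    and "ricci_symmetric U Gs"
    and "projectively_flat U Gs"
    and "equiaffine_einstein U Gs g"
  shows "locally_constant_on U (gen_scalar_curv g Gs)"
proof -
  let ?n = "real CARD('n)"
  have n3: "?n \<ge> 3" using assms(1) by simp
  have oU: "open U" by (rule assms(2))
  obtain lam where lam: "smooth_fun_on U lam" and ein: "\<And>x i j. x \<in> U \<Longrightarrow> ric Gs x i j = lam x * g x i j"
    using assms(11) unfolding equiaffine_einstein_def by blast
  have gsm: "\<And>i j. smooth_fun_on U (\<lambda>x. g x i j)" and gsym: "\<And>x i j. x \<in> U \<Longrightarrow> g x i j = g x j i"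
    and gdet: "\<And>x. x \<in> U \<Longrightarrow> det (gmat g x) \<noteq> 0"
    using assms(3) unfolding pseudo_riemannian_def by blast+
  have Gtf: "\<And>x i j k. x \<in> U \<Longrightarrow> G x i j k = G x j i k"
    using assms(6) unfolding torsion_free_def by blast
  have conj: "\<And>x k i j. x \<in> U \<Longrightarrow> pd k (\<lambda>y. g y i j) x =
        (\<Sum>l\<in>UNIV. G x k i l * g x l j) + (\<Sum>l\<in>UNIV. Gs x k j l * g x i l)"
    using assms(8) unfolding conjugate_triple_def by blast
  have rsym: "\<And>x j k. x \<in> U \<Longrightarrow> ric Gs x j k = ric Gs x k j"
    using assms(9) unfolding ricci_symmetric_def by blast
  have key: "pd b lam x = 0" if xU: "x \<in> U" for x b
  proof -
    obtain V D rho where V: "open V" "x \<in> V" "V \<subseteq> U" and Dsm: "smooth_conn V D"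
      and Dtf: "torsion_free V D" and Dfl: "flat V D" and rsm: "\<And>i. smooth_fun_on V (\<lambda>x. rho x i)"
      and Geq: "\<And>y i j k. y \<in> V \<Longrightarrow> Gs y i j k = D y i j k
            + (if k = j then rho y i else 0) + (if k = i then rho y j else 0)"
      using assms(10) xU unfolding projectively_flat_def by metis
    have GsV: "Gs y i j k = D y i j k + dl k j * rho y i + dl k i * rho y j" if "y \<in> V" for y i j k
      using Geq[OF that] by (simp add: dl_def)
    have Dsym: "D y i j k = D y j i k" if "y \<in> V" for y i j k
      using Dtf that unfolding torsion_free_def by blast
    have Dsmi: "smooth_fun_on V (\<lambda>y. D y i j k)" for i j k using Dsm unfolding smooth_conn_def by blast
    have dD: "(\<lambda>z. D z i j k) differentiable (at y)" if "y \<in> V" for y i j k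
      using smooth_diff[OF Dsmi V(1) that] .
    have drho: "(\<lambda>z. rho z i) differentiable (at y)" if "y \<in> V" for y i
      using smooth_diff[OF rsm V(1) that] .
    define dr where "dr = (\<lambda>a c. pd a (\<lambda>z. rho z c))"
    have drsm: "smooth_fun_on V (dr a c)" for a c unfolding dr_def using smooth_pd[OF rsm] .
    have ddr: "dr a c differentiable (at y)" if "y \<in> V" for y a c
      using smooth_diff[OF drsm V(1) that] .
    define P where "P = (\<lambda>a c y. dr a c y - (\<Sum>m\<in>UNIV. D y a c m * rho y m) - rho y a * rho y c)"
    have pdGs: "pd a (\<lambda>z. Gs z b c l) y = pd a (\<lambda>z. D z b c l) y + dl l c * dr a b y + dl l b * dr a c y"
      if y: "y \<in> V" for y a b c l
    proof -
      have "pd a (\<lambda>z. Gs z b c l) y = pd a (\<lambda>z. D z b c l + dl l c * rho z b + dl l b * rho z c) y"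
        by (rule pd_local[OF V(1) y]) (simp add: GsV)
      also have "\<dots> = pd a (\<lambda>z. D z b c l + dl l c * rho z b) y + pd a (\<lambda>z. dl l b * rho z c) y"
        by (rule pd_add) (use dD[OF y] drho[OF y] in auto)
      also have "\<dots> = pd a (\<lambda>z. D z b c l) y + pd a (\<lambda>z. dl l c * rho z b) y + pd a (\<lambda>z. dl l b * rho z c) y"
        by (subst pd_add) (use dD[OF y] drho[OF y] in auto)
      also have "\<dots> = pd a (\<lambda>z. D z b c l) y + dl l c * dr a b y + dl l b * dr a c y"
        unfolding dr_def using pd_cmult[OF drho[OF y]] by simp
      finally show ?thesis .
    qed
    have curvGs: "curv Gs y a b c l = dl l c * (dr a b y - dr b a y) + dl l b * P a c y - dl l a * P b c y"
      if y: "y \<in> V" for y a b c l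
    proof -
      have q: "(\<Sum>m\<in>UNIV. (D y b c m + dl m c * rho y b + dl m b * rho y c) * (D y a m l + dl l m * rho y a + dl l a * rho y m))
       - (\<Sum>m\<in>UNIV. (D y a c m + dl m c * rho y a + dl m a * rho y c) * (D y b m l + dl l m * rho y b + dl l b * rho y m))
     = (\<Sum>m\<in>UNIV. D y b c m * D y a m l) - (\<Sum>m\<in>UNIV. D y a c m * D y b m l)
       + dl l a * ((\<Sum>m\<in>UNIV. D y b c m * rho y m) + rho y b * rho y c) - dl l b * ((\<Sum>m\<in>UNIV. D y a c m * rho y m) + rho y a * rho y c)"
        by (rule quad) (use Dsym[OF y] in blast)
      have fl: "pd a (\<lambda>z. D z b c l) y - pd b (\<lambda>z. D z a c l) y + (\<Sum>m\<in>UNIV. D y b c m * D y a m l) - (\<Sum>m\<in>UNIV. D y a c m * D y b m l) = 0"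
        using Dfl y unfolding flat_def curv_def by blast
      have e: "curv Gs y a b c l = (pd a (\<lambda>z. D z b c l) y + dl l c * dr a b y + dl l b * dr a c y)
          - (pd b (\<lambda>z. D z a c l) y + dl l c * dr b a y + dl l a * dr b c y)
          + ((\<Sum>m\<in>UNIV. (D y b c m + dl m c * rho y b + dl m b * rho y c) * (D y a m l + dl l m * rho y a + dl l a * rho y m))
       - (\<Sum>m\<in>UNIV. (D y a c m + dl m c * rho y a + dl m a * rho y c) * (D y b m l + dl l m * rho y b + dl l b * rho y m)))"
        unfolding curv_def pdGs[OF y] GsV[OF y] by simp
      show ?thesis unfolding e q P_def using fl by (simp add: algebra_simps)
    qed
    have ricGs: "ric Gs y j k = (dr k j y - dr j k y) + P j k y - ?n * P j k y" if y: "y \<in> V" for y j k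
      unfolding ric_def curvGs[OF y] by (simp add: dlsimps sum_subtractf sum.distrib dl_def)
    have Psym: "P j k y - P k j y = dr j k y - dr k j y" if y: "y \<in> V" for y j k
    proof -
      have "(\<Sum>m\<in>UNIV. D y j k m * rho y m) = (\<Sum>m\<in>UNIV. D y k j m * rho y m)"
        using Dsym[OF y] by simp
      then show ?thesis unfolding P_def by (simp add: mult.commute)
    qed
    have drsym: "dr j k y = dr k j y" if y: "y \<in> V" for y j k
    proof -
      have yU: "y \<in> U" using y V by blast
      have e0: "(dr k j y - dr j k y) + P j k y - ?n * P j k y = (dr j k y - dr k j y) + P k j y - ?n * P k j y"
        using rsym[OF yU, of j k] ricGs[OF y, of j k] ricGs[OF y, of k j] by simp
      have pjk: "P j k y = P k j y + (dr j k y - dr k j y)" using Psym[OF y, of j k] by simp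
      have "(?n + 1) * (dr j k y - dr k j y) = 0" using e0 unfolding pjk by (simp add: algebra_simps)
      then show ?thesis using n3 by simp
    qed
    define mu where "mu = (\<lambda>y. (- 1 / (?n - 1)) * lam y)"
    have Pmu: "P j k y = mu y * g y j k" if y: "y \<in> V" for y j k
    proof -
      have yU: "y \<in> U" using y V by blast
      have "(1 - ?n) * P j k y = lam y * g y j k"
        using ricGs[OF y, of j k] drsym[OF y, of j k] ein[OF yU, of j k] by (simp add: algebra_simps)
      then show ?thesis unfolding mu_def using n3 by (simp add: field_simps)
    qed
    have xV: "x \<in> V" by (rule V(2))
    have lamd: "lam differentiable (at x)" using smooth_diff[OF lam oU xU] .
    have gd: "(\<lambda>y. g y i j) differentiable (at x)" for i j using smooth_diff[OF gsm oU xU] .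
    have pdP: "pd b (P a c) x = pd b (dr a c) x - (\<Sum>m\<in>UNIV. D x a c m * dr b m x + pd b (\<lambda>y. D y a c m) x * rho x m)
        - (rho x a * dr b c x + dr b a x * rho x c)" for a b c
    proof -
      have d1: "(\<lambda>y. \<Sum>m\<in>UNIV. D y a c m * rho y m) differentiable (at x)"
        by (rule differentiable_sum_fn) (use dD[OF xV] drho[OF xV] in auto)
      have "pd b (P a c) x = pd b (\<lambda>y. dr a c y - (\<Sum>m\<in>UNIV. D y a c m * rho y m)) x - pd b (\<lambda>y. rho y a * rho y c) x"
        unfolding P_def by (rule pd_diff) (use ddr[OF xV] d1 drho[OF xV] in auto)
      also have "\<dots> = pd b (dr a c) x - pd b (\<lambda>y. \<Sum>m\<in>UNIV. D y a c m * rho y m) x - pd b (\<lambda>y. rho y a * rho y c) x"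
        using pd_diff[OF ddr[OF xV] d1, of b] by simp
      also have "pd b (\<lambda>y. \<Sum>m\<in>UNIV. D y a c m * rho y m) x = (\<Sum>m\<in>UNIV. pd b (\<lambda>y. D y a c m * rho y m) x)"
        by (rule pd_sum) (use dD[OF xV] drho[OF xV] in auto)
      also have "\<dots> = (\<Sum>m\<in>UNIV. D x a c m * dr b m x + pd b (\<lambda>y. D y a c m) x * rho x m)"
        unfolding dr_def using pd_mult[OF dD[OF xV] drho[OF xV]] by simp
      also have "pd b (\<lambda>y. rho y a * rho y c) x = rho x a * dr b c x + dr b a x * rho x c"
        unfolding dr_def using pd_mult[OF drho[OF xV] drho[OF xV]] by simp
      finally show ?thesis .
    qed
    have schw: "pd b (dr a c) x = pd a (dr b c) x" for a b c
      unfolding dr_def using schwarz_smooth[OF rsm V(1) xV, of b a] .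
    have cod: "pd b (P a c) x - pd a (P b c) x = - (\<Sum>m\<in>UNIV. D x a c m * P b m x) + (\<Sum>m\<in>UNIV. D x b c m * P a m x)
        - rho x a * P b c x + rho x b * P a c x" for a b c
    proof -
      have alg: "(- (\<Sum>m\<in>UNIV. D x a c m * dr b m x + pd b (\<lambda>y. D y a c m) x * rho x m) - (rho x a * dr b c x + dr b a x * rho x c))
       - (- (\<Sum>m\<in>UNIV. D x b c m * dr a m x + pd a (\<lambda>y. D y b c m) x * rho x m) - (rho x b * dr a c x + dr a b x * rho x c))
     = - (\<Sum>m\<in>UNIV. D x a c m * P b m x) + (\<Sum>m\<in>UNIV. D x b c m * P a m x) - rho x a * P b c x + rho x b * P a c x"
      proof (rule codazzi_alg[where D = "D x" and r = "rho x" and dr = "\<lambda>i j. dr i j x" and P = "\<lambda>i j. P i j x"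
            and DD = "\<lambda>b a c m. pd b (\<lambda>y. D y a c m) x"])
        show "\<And>i j k. D x i j k = D x j i k" using Dsym[OF xV] by blast
        show "dr a b x = dr b a x" using drsym[OF xV] .
        show "\<And>m. pd b (\<lambda>y. D y a c m) x - pd a (\<lambda>y. D y b c m) x + (\<Sum>k\<in>UNIV. D x a c k * D x b k m) - (\<Sum>k\<in>UNIV. D x b c k * D x a k m) = 0"
          using Dfl xV unfolding flat_def curv_def by blast
        show "\<And>i j. P i j x = dr i j x - (\<Sum>m\<in>UNIV. D x i j m * rho x m) - rho x i * rho x j"
          unfolding P_def by simp
      qed
      show ?thesis unfolding pdP using schw[of b a c] alg by linarith
    qed
    have mud: "mu differentiable (at x)" unfolding mu_def by (intro differentiable_mult differentiable_const lamd)
    have pdPmu: "pd b (P a c) x = mu x * pd b (\<lambda>y. g y a c) x + pd b mu x * g x a c" for a b c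
    proof -
      have "pd b (P a c) x = pd b (\<lambda>y. mu y * g y a c) x"
        by (rule pd_local[OF V(1) xV]) (simp add: Pmu)
      also have "\<dots> = mu x * pd b (\<lambda>y. g y a c) x + pd b mu x * g x a c"
        by (rule pd_mult[OF mud gd])
      finally show ?thesis .
    qed
    have eq: "pd b mu x * g x a c = pd a mu x * g x b c" for a b c
    proof (rule final_alg[where D = "D x" and G = "G x" and Ga = "Gs x" and r = "rho x" and mu = "mu x"
          and g = "g x" and dg = "\<lambda>b a c. pd b (\<lambda>y. g y a c) x" and dmu = "\<lambda>b. pd b mu x"])
      show "\<And>i j. g x i j = g x j i" using gsym[OF xU] .
      show "\<And>i j k. G x i j k = G x j i k" using Gtf[OF xU] .
      show "\<And>i j k. D x i j k = Gs x i j k - dl k j * rho x i - dl k i * rho x j" using GsV[OF xV] by simp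
      show "\<And>b a c. pd b (\<lambda>y. g y a c) x = (\<Sum>l\<in>UNIV. G x b a l * g x l c) + (\<Sum>l\<in>UNIV. Gs x b c l * g x a l)"
        using conj[OF xU] .
      show "(mu x * pd b (\<lambda>y. g y a c) x + pd b mu x * g x a c) - (mu x * pd a (\<lambda>y. g y b c) x + pd a mu x * g x b c)
       = - (\<Sum>m\<in>UNIV. D x a c m * (mu x * g x b m)) + (\<Sum>m\<in>UNIV. D x b c m * (mu x * g x a m))
         - rho x a * (mu x * g x b c) + rho x b * (mu x * g x a c)"
        using cod[of b a c] unfolding pdPmu Pmu[OF xV] .
    qed
    have "\<exists>a::'n. a \<noteq> b"
    proof (rule ccontr)
      assume "\<not> (\<exists>a::'n. a \<noteq> b)"
      then have u: "(UNIV :: 'n set) = {b}" by auto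
      have "card (UNIV :: 'n set) = card {b}" using u by (rule arg_cong)
      then have "CARD('n) = 1" by simp
      then show False using assms(1) by simp
    qed
    then obtain a :: 'n where ab: "a \<noteq> b" by blast
    have "pd b mu x = 0"
      by (rule rows_prop[OF gdet[OF xU] ab, of "\<lambda>b. pd b mu x"]) (simp add: gmat_def eq)
    moreover have "pd b mu x = (- 1 / (?n - 1)) * pd b lam x" unfolding mu_def by (rule pd_cmult[OF lamd])
    ultimately show ?thesis using n3 by simp
  qed
  have tau: "gen_scalar_curv g Gs y = ?n * lam y" if "y \<in> U" for y
  proof -
    have "gen_scalar_curv g Gs y = lam y * (\<Sum>i\<in>UNIV. \<Sum>j\<in>UNIV. matrix_inv (gmat g y) $ i $ j * g y i j)"
      unfolding gen_scalar_curv_def using ein[OF that] by (simp add: sum_distrib_left mult_ac)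
    also have "\<dots> = lam y * ?n" using trace_inv[OF gdet[OF that]] gsym[OF that] by simp
    finally show ?thesis by simp
  qed
  show ?thesis unfolding locally_constant_on_def
  proof
    fix p assume pU: "p \<in> U"
    obtain r where r: "r > 0" "ball p r \<subseteq> U" using oU pU open_contains_ball by blast
    have "\<exists>c. \<forall>y\<in>ball p r. lam y = c"
    proof (rule has_derivative_zero_constant)
      show "convex (ball p r)" by simp
      fix y assume "y \<in> ball p r"
      then have yU: "y \<in> U" using r by blast
      have "(lam has_derivative (\<lambda>h. 0)) (at y)"
        by (rule zero_deriv) (use smooth_diff[OF lam oU yU] key[OF yU] in auto)
      then show "(lam has_derivative (\<lambda>h. 0)) (at y within ball p r)"
        by (rule has_derivative_at_withinI)
    qed
    then obtain c where c: "\<forall>y\<in>ball p r. lam y = c" by blast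
    show "\<exists>V. open V \<and> p \<in> V \<and> (\<forall>x\<in>V \<inter> U. gen_scalar_curv g Gs x = gen_scalar_curv g Gs p)"
    proof (intro exI conjI ballI)
      show "open (ball p r)" by simp
      show "p \<in> ball p r" using r by simp
      fix y assume "y \<in> ball p r \<inter> U"
      then show "gen_scalar_curv g Gs y = gen_scalar_curv g Gs p"
        using tau pU c r by auto
    qed
  qed
qed

end
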